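(* Let $n\ge 1$, $N\ge 1$, and let $F=(f_{ij})_{i,j=1}^N$ be a real symmetric positive definite matrix with $f_{ij}\le 0$ for all $i\ne j$. For variables $x_1,\dots,x_N\in\mathbb{R}^n$ define the probability measure $$d\mu(x_1,\dots,x_N) = Z^{-1} e^{-\sum_{i,j=1}^N f_{ij}\, x_i\cdot x_j/2}\, dx_1\cdots dx_N$$ on $(\mathbb{R}^n)^N$, where $Z>0$ is the normalizing constant and $dx_i$ is Lebesgue measure on $\mathbb{R}^n$, and let $E f = \int f\, d\mu$. Let $\mathcal{E}$ be the cone of non-negative (finite) linear combinations of multinomials $\prod_{1\le i\le j\le N}(x_i\cdot x_j)^{n_{i,j}}$ with integers $n_{i,j}\ge 0$. Then for all $f,g\in\mathcal{E}$, $$E f \ge 0 \quad\text{and}\quad E(fg) \ge (E f)(E g).$$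
   Context: $x_i\cdot x_j$ denotes the Euclidean inner product in $\mathbb{R}^n$. *)

theory Defs
  imports "HOL-Analysis.Analysis"
begin

text \<open>Configurations (x_1,...,x_N) with x_i in R^n are elements of real^'n^'k,
  where 'k indexes 1..N and 'n indexes the coordinates of R^n.\<close>

definition gauss_weight :: "real^'k^'k \<Rightarrow> real^'n^'k \<Rightarrow> real" where
  "gauss_weight F x = exp (- (\<Sum>i\<in>UNIV. \<Sum>j\<in>UNIV. F $ i $ j * (x $ i \<bullet> x $ j)) / 2)"

definition gauss_Z :: "real^'k^'k \<Rightarrow> ('n::finite) itself \<Rightarrow> real" where
  "gauss_Z F _ = (LINT x|(lborel :: (real^'n^'k) measure). gauss_weight F x)"

definition gauss_measure :: "real^'k^'k \<Rightarrow> (real^'n^'k) measure" where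
  "gauss_measure F = density lborel (\<lambda>x. ennreal (gauss_weight F x / gauss_Z F TYPE('n)))"

definition gauss_E :: "real^'k^'k \<Rightarrow> (real^'n^'k \<Rightarrow> real) \<Rightarrow> real" where
  "gauss_E F f = integral\<^sup>L (gauss_measure F) f"

definition multinomial :: "('k::{finite,linorder} \<times> 'k \<Rightarrow> nat) \<Rightarrow> ((real,'n::finite) vec, 'k) vec \<Rightarrow> real" where
  "multinomial e x = (\<Prod>p\<in>{(i,j). i \<le> j}. (x $ fst p \<bullet> x $ snd p) ^ e p)"

definition multinomial_cone :: "(((real,'n::finite) vec, 'k::{finite,linorder}) vec \<Rightarrow> real) set" where
  "multinomial_cone = {f. \<exists>S c. finite S \<and> (\<forall>e\<in>S. c e \<ge> 0) \<and>
      f = (\<lambda>x. \<Sum>e\<in>S. c e * multinomial e x)}"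

end

theory Submission
  imports Defs "HOL-Probability.Probability" "HOL-Real_Asymp.Real_Asymp" "HOL-Library.Function_Algebras"
begin

lemma int1d:
  assumes "(lam::real) > 0"
  shows "integrable lborel (\<lambda>t. \<bar>t + s\<bar>^k * exp(-lam*(t+s)^2/2))"
proof -
  define \<sigma> where "\<sigma> = 1 / sqrt lam"
  have s2: "\<sigma>^2 = 1/lam" using assms by (simp add: \<sigma>_def power_divide)
  have "integrable lborel (\<lambda>t. sqrt (2*pi/lam) * (normal_density (-s) \<sigma> t * \<bar>t - (-s)\<bar>^k))"
    using assms by (intro integrable_mult_right integrable_normal_moment_abs) (simp add: \<sigma>_def)
  moreover have "(\<lambda>t. sqrt (2*pi/lam) * (normal_density (-s) \<sigma> t * \<bar>t - (-s)\<bar>^k)) = (\<lambda>t. \<bar>t + s\<bar>^k * exp(-lam*(t+s)^2/2))"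
  proof
    fix t
    have a: "sqrt (2*pi/lam) * (1 / sqrt (2 * pi * \<sigma>\<^sup>2)) = 1"
      using assms by (simp add: s2 real_sqrt_divide)
    have b: "-(t - (-s))\<^sup>2/ (2 * \<sigma>\<^sup>2) = -lam*(t+s)^2/2" using assms by (simp add: s2 field_simps)
    show "sqrt (2*pi/lam) * (normal_density (-s) \<sigma> t * \<bar>t - (-s)\<bar>^k) = \<bar>t + s\<bar>^k * exp(-lam*(t+s)^2/2)"
      unfolding normal_density_def b using a assms by (simp add: algebra_simps)
  qed
  ultimately show ?thesis by metis
qed

lemma lim1d_top:
  assumes "(lam::real) > 0"
  shows "((\<lambda>u. \<bar>u\<bar>^k * exp(-lam*u^2/2)) \<longlongrightarrow> 0) at_top"
  using assms by real_asymp

lemma lim1d_bot: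
  assumes "(lam::real) > 0"
  shows "((\<lambda>u. \<bar>u\<bar>^k * exp(-lam*u^2/2)) \<longlongrightarrow> 0) at_bot"
  using assms by real_asymp

lemma lim1d_s_top:
  assumes "(lam::real) > 0"
  shows "((\<lambda>t. \<bar>s+t\<bar>^k * exp(-lam*(s+t)^2/2)) \<longlongrightarrow> 0) at_top"
  using assms by real_asymp

lemma lim1d_s_bot:
  assumes "(lam::real) > 0"
  shows "((\<lambda>t. \<bar>s+t\<bar>^k * exp(-lam*(s+t)^2/2)) \<longlongrightarrow> 0) at_bot"
  using assms by real_asymp

lemma ftc1d:
  fixes K s L0 q Q0 lam :: real and k :: nat
  assumes lam: "lam > 0" and bnd: "\<And>t. Q0 + 2*t*L0 + t^2*q \<ge> lam*(s+t)^2"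
  shows "integral\<^sup>L lborel (\<lambda>t. K*(real k*(s+t)^(k-1) - (L0+t*q)*(s+t)^k) * exp(-(Q0+2*t*L0+t^2*q)/2)) = 0"
proof -
  define E where "E t = exp(-(Q0+2*t*L0+t^2*q)/2)" for t
  define f where "f t = K*(real k*(s+t)^(k-1) - (L0+t*q)*(s+t)^k) * E t" for t
  define F where "F t = K*(s+t)^k * E t" for t
  have Eb: "E t \<le> exp(-lam*(s+t)^2/2)" for t
    unfolding E_def using bnd[of t] by simp
  have Epos: "E t > 0" for t unfolding E_def by simp
  have deriv: "(F has_real_derivative f t) (at t)" for t
    unfolding F_def f_def E_def
    apply (rule derivative_eq_intros refl)+
       apply simp
      apply (rule refl)
     apply (rule refl)
    apply (simp add: field_simps power2_eq_square)
    done
  have cont: "isCont f t" for t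
    unfolding f_def E_def by (auto intro!: continuous_intros)
  define g where "g t = \<bar>K\<bar> * (real k*(\<bar>t+s\<bar>^(k-1) * exp(-lam*(t+s)^2/2)) + \<bar>L0 - s*q\<bar> * (\<bar>t+s\<bar>^k * exp(-lam*(t+s)^2/2))
      + \<bar>q\<bar> * (\<bar>t+s\<bar>^(k+1) * exp(-lam*(t+s)^2/2)))" for t
  have gint: "integrable lborel g"
    unfolding g_def
    by (rule integrable_mult_right; intro Bochner_Integration.integrable_add; rule integrable_mult_right; rule int1d[OF lam])
  have fb: "norm (f t) \<le> g t" for t
  proof -
    have e: "L0 + t*q = (L0 - s*q) + q*(s+t)" by algebra
    have "\<bar>real k*(s+t)^(k-1) - (L0+t*q)*(s+t)^k\<bar> \<le> real k*\<bar>t+s\<bar>^(k-1) + \<bar>L0 - s*q\<bar> * \<bar>t+s\<bar>^k + \<bar>q\<bar> * \<bar>t+s\<bar>^(k+1)"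
    proof -
      have "\<bar>real k*(s+t)^(k-1) - (L0+t*q)*(s+t)^k\<bar> \<le> \<bar>real k*(s+t)^(k-1)\<bar> + \<bar>(L0 - s*q)*(s+t)^k\<bar> + \<bar>q*(s+t)*(s+t)^k\<bar>"
        unfolding e by (simp add: algebra_simps)
      also have "\<dots> = real k*\<bar>t+s\<bar>^(k-1) + \<bar>L0 - s*q\<bar> * \<bar>t+s\<bar>^k + \<bar>q\<bar> * \<bar>t+s\<bar>^(k+1)"
        by (simp add: abs_mult power_abs add.commute)
      finally show ?thesis .
    qed
    then have "\<bar>f t\<bar> \<le> \<bar>K\<bar> * (real k*\<bar>t+s\<bar>^(k-1) + \<bar>L0 - s*q\<bar> * \<bar>t+s\<bar>^k + \<bar>q\<bar> * \<bar>t+s\<bar>^(k+1)) * exp(-lam*(t+s)^2/2)"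
      unfolding f_def abs_mult using Eb[of t] Epos[of t]
      by (intro mult_mono) (auto simp: add.commute intro: mult_left_mono)
    then show ?thesis by (simp add: g_def algebra_simps)
  qed
  have fint: "integrable lborel f"
  proof (rule Bochner_Integration.integrable_bound[OF gint])
    show "f \<in> borel_measurable lborel" using cont
      by (auto intro!: borel_measurable_continuous_onI continuous_at_imp_continuous_on)
    show "AE x in lborel. norm (f x) \<le> norm (g x)"
      by (intro AE_I2 order_trans[OF fb]) simp
  qed
  have Fb: "norm (F t) \<le> \<bar>K\<bar> * (\<bar>s+t\<bar>^k * exp(-lam*(s+t)^2/2))" for t
    unfolding F_def using Eb[of t] Epos[of t]
    by (simp add: abs_mult power_abs mult.assoc mult_left_mono)
  have Ftop: "(F \<longlongrightarrow> 0) at_top"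
    by (rule Lim_null_comparison[OF always_eventually[OF allI[OF Fb]]])
       (use tendsto_mult_right_zero[OF lim1d_s_top[OF lam]] in auto)
  have Fbot: "(F \<longlongrightarrow> 0) at_bot"
    by (rule Lim_null_comparison[OF always_eventually[OF allI[OF Fb]]])
       (use tendsto_mult_right_zero[OF lim1d_s_bot[OF lam]] in auto)
  have "(LBINT x=-\<infinity>..\<infinity>. f x) = 0 - 0"
    by (rule interval_integral_FTC_integrable[where F=F])
       (use deriv cont fint Ftop Fbot in \<open>auto simp: has_real_derivative_iff_has_vector_derivative[symmetric] ereal_tendsto_simps1 set_integrable_def\<close>)
  then have "integral\<^sup>L lborel f = 0"
    by (simp add: interval_lebesgue_integral_def einterval_def set_lebesgue_integral_def)
  then show ?thesis unfolding f_def E_def .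
qed

definition gmono :: "('a::euclidean_space \<Rightarrow> nat) \<Rightarrow> 'a \<Rightarrow> real" where
  "gmono p x = (\<Prod>b\<in>Basis. (x \<bullet> b) ^ p b)"

definition gw :: "('a::euclidean_space \<Rightarrow> 'a) \<Rightarrow> 'a \<Rightarrow> real" where
  "gw M x = exp (-(x \<bullet> M x)/2)"

lemma fubini_zero:
  fixes D :: "'a::euclidean_space \<Rightarrow> real"
  assumes \<beta>: "\<beta> \<in> Basis" and Dm: "D \<in> borel_measurable borel" and Di: "integrable lborel D"
    and z: "\<And>y. (LINT t|lborel. D (y + t *\<^sub>R \<beta>)) = 0"
  shows "(LINT x|lborel. D x) = 0"
proof -
  interpret product_sigma_finite "\<lambda>_::'a. (lborel::real measure)" by standard
  define S where "S = (\<lambda>f. \<Sum>b\<in>Basis. f b *\<^sub>R b :: 'a)"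
  have Sm: "S \<in> measurable (Pi\<^sub>M Basis (\<lambda>_. lborel)) borel"
    unfolding S_def by measurable
  have L: "lborel = distr (Pi\<^sub>M Basis (\<lambda>_. lborel)) borel S"
    unfolding S_def by (rule lborel_eq)
  have B: "Basis = insert \<beta> (Basis - {\<beta>})" using \<beta> by auto
  have "integrable (distr (Pi\<^sub>M Basis (\<lambda>_. lborel)) borel S) D"
    using Di L by simp
  then have iP: "integrable (Pi\<^sub>M (insert \<beta> (Basis - {\<beta>})) (\<lambda>_. lborel)) (\<lambda>f. D (S f))"
    using integrable_distr_eq[OF Sm Dm] B by simp
  have "(LINT x|lborel. D x) = integral\<^sup>L (distr (Pi\<^sub>M Basis (\<lambda>_. lborel)) borel S) D"
    using L by simp
  also have "\<dots> = integral\<^sup>L (Pi\<^sub>M Basis (\<lambda>_. lborel)) (\<lambda>f. D (S f))"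
    by (rule integral_distr[OF Sm Dm])
  also have "\<dots> = integral\<^sup>L (Pi\<^sub>M (insert \<beta> (Basis - {\<beta>})) (\<lambda>_. lborel)) (\<lambda>f. D (S f))"
    using B by simp
  also have "\<dots> = (\<integral>x. (\<integral>y. D (S (x(\<beta>:=y))) \<partial>lborel) \<partial>Pi\<^sub>M (Basis - {\<beta>}) (\<lambda>_. lborel))"
    by (rule product_integral_insert[OF _ _ iP]) auto
  also have "\<dots> = (\<integral>x. 0 \<partial>Pi\<^sub>M (Basis - {\<beta>}) (\<lambda>_. lborel))"
  proof -
    have "(\<integral>y. D (S (x(\<beta>:=y))) \<partial>lborel) = 0" for x
    proof -
    have "S (x(\<beta>:=y)) = (\<Sum>b\<in>Basis - {\<beta>}. x b *\<^sub>R b) + y *\<^sub>R \<beta>" for y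
      unfolding S_def using \<beta> by (subst sum.remove[OF finite_Basis \<beta>]) (auto intro!: sum.cong simp: add.commute)
    then show ?thesis using z by simp
    qed
    then show ?thesis by simp
  qed
  finally show ?thesis by simp
qed

locale gsetup =
  fixes M :: "'a::euclidean_space \<Rightarrow> 'a" and lam :: real
  assumes lin: "linear M" and sa: "\<And>u v. u \<bullet> M v = M u \<bullet> v" and lam: "lam > 0"
    and coer: "\<And>x. x \<bullet> M x \<ge> lam * (norm x)^2"
    and invpos: "\<And>\<alpha>. \<alpha> \<in> Basis \<Longrightarrow> \<exists>V. M V = \<alpha> \<and> (\<forall>\<beta>\<in>Basis. V \<bullet> \<beta> \<ge> 0)"
begin

lemma blin: "bounded_linear M" using lin by (simp add: linear_conv_bounded_linear)

lemma contM: "continuous_on UNIV M" using blin by (simp add: linear_continuous_on)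

lemma cont_mono_w: "continuous_on UNIV (\<lambda>x. gmono p x * gw M x)"
  unfolding gmono_def gw_def
  by (intro continuous_intros continuous_on_compose2[OF contM]) auto

lemma meas_mono_w: "(\<lambda>x. gmono p x * gw M x) \<in> borel_measurable borel"
  by (rule borel_measurable_continuous_onI[OF cont_mono_w])

lemma gw_bound: "gw M x \<le> (\<Prod>b\<in>Basis. exp (-lam * (x \<bullet> b)^2 / 2))"
proof -
  have n: "(norm x)^2 = (\<Sum>b\<in>Basis. (x \<bullet> b)^2)"
    unfolding power2_norm_eq_inner by (subst euclidean_inner) (simp add: power2_eq_square)
  have "gw M x \<le> exp (-lam * (norm x)^2 / 2)"
    unfolding gw_def using coer[of x] by simp
  also have "\<dots> = exp (\<Sum>b\<in>Basis. -lam * (x \<bullet> b)^2 / 2)"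
    unfolding n by (simp add: sum_distrib_left sum_divide_distrib)
  also have "\<dots> = (\<Prod>b\<in>Basis. exp (-lam * (x \<bullet> b)^2 / 2))"
    by (simp add: exp_sum)
  finally show ?thesis .
qed

lemma gint: "integrable lborel (\<lambda>x. gmono p x * gw M x)"
proof -
  define h where "h b t = \<bar>t\<bar>^(p b) * exp(-lam*t^2/2)" for b t
  have hnn: "h b t \<ge> 0" for b t unfolding h_def by simp
  have hint: "integrable lborel (h b)" for b
    using int1d[OF lam, of 0 "p b"] unfolding h_def by simp
  have hm: "h b \<in> borel_measurable borel" for b unfolding h_def by measurable
  have bnd: "norm (gmono p x * gw M x) \<le> (\<Prod>b\<in>Basis. h b (x \<bullet> b))" for x
  proof -
    have "norm (gmono p x * gw M x) = (\<Prod>b\<in>Basis. \<bar>x \<bullet> b\<bar>^(p b)) * gw M x"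
      unfolding gmono_def gw_def by (simp add: abs_mult abs_prod power_abs)
    also have "\<dots> \<le> (\<Prod>b\<in>Basis. \<bar>x \<bullet> b\<bar>^(p b)) * (\<Prod>b\<in>Basis. exp (-lam * (x \<bullet> b)^2 / 2))"
      by (intro mult_left_mono gw_bound prod_nonneg) auto
    also have "\<dots> = (\<Prod>b\<in>Basis. h b (x \<bullet> b))"
      unfolding h_def prod.distrib by simp
    finally show ?thesis .
  qed
  have "(\<integral>\<^sup>+x. ennreal (norm (gmono p x * gw M x)) \<partial>lborel) \<le> (\<integral>\<^sup>+x. (\<Prod>b\<in>Basis. ennreal (h b (x \<bullet> b))) \<partial>lborel)"
    using bnd by (intro nn_integral_mono) (simp add: prod_ennreal hnn prod_nonneg)
  also have "\<dots> = (\<Prod>b\<in>Basis. (\<integral>\<^sup>+t. ennreal (h b t) \<partial>lborel))"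
    by (rule nn_integral_lborel_prod) (auto simp: hm hnn)
  also have "\<dots> = (\<Prod>b\<in>Basis. ennreal (integral\<^sup>L lborel (h b)))"
    by (intro prod.cong refl nn_integral_eq_integral hint) (simp add: hnn)
  also have "\<dots> < \<infinity>"
    by (simp add: prod_ennreal integral_nonneg_AE hnn)
  finally have fin: "(\<integral>\<^sup>+x. ennreal (norm (gmono p x * gw M x)) \<partial>lborel) < \<infinity>" .
  have ml: "(\<lambda>x. gmono p x * gw M x) \<in> borel_measurable lborel" using meas_mono_w by simp
  show ?thesis using fin ml by (simp add: integrable_iff_bounded)
qed

end

lemma gmono_succ:
  assumes "\<gamma> \<in> Basis"
  shows "(x \<bullet> \<gamma>) * gmono p x = gmono (p(\<gamma> := p \<gamma> + 1)) x"
proof -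
  have "gmono (p(\<gamma> := p \<gamma> + 1)) x = (x \<bullet> \<gamma>)^(p \<gamma> + 1) * (\<Prod>b\<in>Basis-{\<gamma>}. (x \<bullet> b) ^ p b)"
    unfolding gmono_def by (subst prod.remove[OF finite_Basis assms]) (auto intro!: prod.cong)
  also have "\<dots> = (x \<bullet> \<gamma>) * ((x \<bullet> \<gamma>)^(p \<gamma>) * (\<Prod>b\<in>Basis-{\<gamma>}. (x \<bullet> b) ^ p b))" by simp
  also have "(x \<bullet> \<gamma>)^(p \<gamma>) * (\<Prod>b\<in>Basis-{\<gamma>}. (x \<bullet> b) ^ p b) = gmono p x"
    unfolding gmono_def by (rule prod.remove[OF finite_Basis assms, symmetric])
  finally show ?thesis by (rule sym)
qed

lemma gmono_shift:
  assumes \<beta>: "\<beta> \<in> Basis"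
  shows "gmono p (y + t *\<^sub>R \<beta>) = (\<Prod>b\<in>Basis-{\<beta>}. (y \<bullet> b) ^ p b) * (y \<bullet> \<beta> + t) ^ p \<beta>"
proof -
  have "gmono p (y + t *\<^sub>R \<beta>) = ((y + t *\<^sub>R \<beta>) \<bullet> \<beta>) ^ p \<beta> * (\<Prod>b\<in>Basis-{\<beta>}. ((y + t *\<^sub>R \<beta>) \<bullet> b) ^ p b)"
    unfolding gmono_def by (rule prod.remove[OF finite_Basis \<beta>])
  also have "(\<Prod>b\<in>Basis-{\<beta>}. ((y + t *\<^sub>R \<beta>) \<bullet> b) ^ p b) = (\<Prod>b\<in>Basis-{\<beta>}. (y \<bullet> b) ^ p b)"
    using \<beta> by (intro prod.cong refl) (auto simp: inner_add_left inner_not_same_Basis)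
  also have "(y + t *\<^sub>R \<beta>) \<bullet> \<beta> = y \<bullet> \<beta> + t" using \<beta> by (simp add: inner_add_left)
  finally show ?thesis by simp
qed

lemma gmono_cong: "(\<And>b. b \<in> Basis \<Longrightarrow> p b = q b) \<Longrightarrow> gmono p = gmono q"
  unfolding gmono_def by (intro ext prod.cong) auto

context gsetup
begin

lemma lin_int: "integrable lborel (\<lambda>x. (v \<bullet> x) * (gmono p x * gw M x))"
proof -
  have "(\<lambda>x. (v \<bullet> x) * (gmono p x * gw M x)) = (\<lambda>x. \<Sum>\<gamma>\<in>Basis. (v \<bullet> \<gamma>) * (gmono (p(\<gamma> := p \<gamma> + 1)) x * gw M x))"
  proof
    fix x
    have "(v \<bullet> x) * (gmono p x * gw M x) = (\<Sum>\<gamma>\<in>Basis. (v \<bullet> \<gamma>) * (((x \<bullet> \<gamma>) * gmono p x) * gw M x))"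
      by (subst euclidean_inner) (simp add: sum_distrib_left sum_distrib_right mult_ac)
    also have "\<dots> = (\<Sum>\<gamma>\<in>Basis. (v \<bullet> \<gamma>) * (gmono (p(\<gamma> := p \<gamma> + 1)) x * gw M x))"
      by (intro sum.cong refl) (simp add: gmono_succ)
    finally show "(v \<bullet> x) * (gmono p x * gw M x) = \<dots>" .
  qed
  moreover have "integrable lborel (\<lambda>x. \<Sum>\<gamma>\<in>Basis. (v \<bullet> \<gamma>) * (gmono (p(\<gamma> := p \<gamma> + 1)) x * gw M x))"
    by (intro Bochner_Integration.integrable_sum ballI integrable_mult_right gint)
  ultimately show ?thesis by simp
qed

lemma quad_shift: "(y + t *\<^sub>R \<beta>) \<bullet> M (y + t *\<^sub>R \<beta>) = y \<bullet> M y + 2 * t * (\<beta> \<bullet> M y) + t^2 * (\<beta> \<bullet> M \<beta>)"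
proof -
  have "M (y + t *\<^sub>R \<beta>) = M y + t *\<^sub>R M \<beta>" using lin by (simp add: linear_add linear_scale)
  moreover have "y \<bullet> M \<beta> = \<beta> \<bullet> M y" using sa[of y \<beta>] sa[of \<beta> y] by (simp add: inner_commute)
  ultimately show ?thesis
    by (simp add: inner_add_left inner_add_right algebra_simps power2_eq_square)
qed

lemma ibp:
  assumes \<beta>: "\<beta> \<in> Basis"
  shows "(LINT x|lborel. (\<beta> \<bullet> M x) * (gmono p x * gw M x)) =
         (LINT x|lborel. real (p \<beta>) * (gmono (p(\<beta> := p \<beta> - 1)) x * gw M x))"
proof -
  define p' where "p' = p(\<beta> := p \<beta> - 1)"
  define D where "D x = real (p \<beta>) * (gmono p' x * gw M x) - (\<beta> \<bullet> M x) * (gmono p x * gw M x)" for x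
  have i1: "integrable lborel (\<lambda>x. (\<beta> \<bullet> M x) * (gmono p x * gw M x))"
    using lin_int[of "M \<beta>"] by (simp add: sa)
  have i2: "integrable lborel (\<lambda>x. real (p \<beta>) * (gmono p' x * gw M x))"
    by (intro integrable_mult_right gint)
  have Di: "integrable lborel D" unfolding D_def using i1 i2 by simp
  have Dm: "D \<in> borel_measurable borel"
    unfolding D_def gmono_def gw_def
    by (intro borel_measurable_continuous_onI continuous_intros continuous_on_compose2[OF contM]) auto
  have z: "(LINT t|lborel. D (y + t *\<^sub>R \<beta>)) = 0" for y
  proof -
    define K where "K = (\<Prod>b\<in>Basis-{\<beta>}. (y \<bullet> b) ^ p b)"
    define s where "s = y \<bullet> \<beta>"
    define L0 where "L0 = \<beta> \<bullet> M y"
    define q where "q = \<beta> \<bullet> M \<beta>"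
    define Q0 where "Q0 = y \<bullet> M y"
    define k where "k = p \<beta>"
    have K': "(\<Prod>b\<in>Basis-{\<beta>}. (y \<bullet> b) ^ p' b) = K"
      unfolding K_def p'_def by (intro prod.cong refl) auto
    have "D (y + t *\<^sub>R \<beta>) = K*(real k*(s+t)^(k-1) - (L0+t*q)*(s+t)^k) * exp(-(Q0+2*t*L0+t^2*q)/2)" for t
    proof -
      have a: "gmono p (y + t *\<^sub>R \<beta>) = K * (s+t)^k"
        unfolding K_def s_def k_def by (rule gmono_shift[OF \<beta>])
      have b: "gmono p' (y + t *\<^sub>R \<beta>) = K * (s+t)^(k-1)"
        using gmono_shift[OF \<beta>, of p' y t] K' unfolding s_def k_def p'_def by simp
      have c: "gw M (y + t *\<^sub>R \<beta>) = exp(-(Q0+2*t*L0+t^2*q)/2)"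
        unfolding gw_def quad_shift Q0_def L0_def q_def by simp
      have d: "\<beta> \<bullet> M (y + t *\<^sub>R \<beta>) = L0 + t * q"
        using lin unfolding L0_def q_def by (simp add: linear_add linear_scale inner_add_right)
      show ?thesis unfolding D_def a b c d k_def by (simp add: algebra_simps)
    qed
    moreover have "Q0 + 2*t*L0 + t^2*q \<ge> lam*(s+t)^2" for t
    proof -
      have "Q0 + 2*t*L0 + t^2*q = (y + t *\<^sub>R \<beta>) \<bullet> M (y + t *\<^sub>R \<beta>)"
        unfolding quad_shift Q0_def L0_def q_def by simp
      also have "\<dots> \<ge> lam * (norm (y + t *\<^sub>R \<beta>))^2" by (rule coer)
      moreover have "(s+t)^2 \<le> (norm (y + t *\<^sub>R \<beta>))^2"
      proof -
        have "s + t = (y + t *\<^sub>R \<beta>) \<bullet> \<beta>" unfolding s_def using \<beta> by (simp add: inner_add_left)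
        then have "\<bar>s+t\<bar> \<le> norm (y + t *\<^sub>R \<beta>)"
          using Cauchy_Schwarz_ineq2[of "y + t *\<^sub>R \<beta>" \<beta>] \<beta> by simp
        from power_mono[OF this abs_ge_zero, of 2] show ?thesis by simp
      qed
      ultimately show ?thesis using lam by (smt (verit) mult_left_mono)
    qed
    ultimately show ?thesis using ftc1d[OF lam] by simp
  qed
  have "(LINT x|lborel. D x) = 0" by (rule fubini_zero[OF \<beta> Dm Di z])
  then show ?thesis unfolding D_def p'_def using i1 i2 by (simp add: p'_def)
qed

end

lemma gmono_zero: "(\<And>b. b \<in> Basis \<Longrightarrow> p b = 0) \<Longrightarrow> gmono p x = 1"
  unfolding gmono_def by (intro prod.neutral) auto

context gsetup
begin

definition Zc where "Zc = (LINT x|lborel. gw M x)"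
definition En where "En p = (LINT x|lborel. gmono p x * gw M x) / Zc"

lemma Zc_pos: "Zc > 0"
proof -
  have i: "integrable lborel (gw M)" using gint[of "\<lambda>_. 0"] by (simp add: gmono_zero)
  have nn: "AE x in lborel. 0 \<le> gw M x" by (simp add: gw_def)
  have "Zc \<ge> 0" unfolding Zc_def by (rule integral_nonneg_AE[OF nn])
  moreover have "Zc \<noteq> 0"
  proof
    assume "Zc = 0"
    then have "AE x in lborel. gw M x = 0"
      using integral_nonneg_eq_0_iff_AE[OF i nn] unfolding Zc_def by simp
    then have "AE x in (lborel::'a measure). False" by (simp add: gw_def)
    then have "ae_filter (lborel::'a measure) = bot" using trivial_limit_def by blast
    then show False by (simp add: ae_filter_eq_bot_iff)
  qed
  ultimately show ?thesis by simp
qed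

lemma En_zero: "(\<And>b. b \<in> Basis \<Longrightarrow> p b = 0) \<Longrightarrow> En p = 1"
  unfolding En_def Zc_def using Zc_pos unfolding Zc_def by (simp add: gmono_zero)

lemma En_rec:
  assumes \<alpha>: "\<alpha> \<in> Basis" and V: "M V = \<alpha>"
  shows "En (p(\<alpha> := p \<alpha> + 1)) = (\<Sum>b\<in>Basis. (V \<bullet> b) * (real (p b) * En (p(b := p b - 1))))"
proof -
  have e: "gmono (p(\<alpha> := p \<alpha> + 1)) x * gw M x = (\<Sum>b\<in>Basis. (V \<bullet> b) * ((b \<bullet> M x) * (gmono p x * gw M x)))" for x
  proof -
    have "x \<bullet> \<alpha> = (\<Sum>b\<in>Basis. (V \<bullet> b) * (b \<bullet> M x))"
    proof -
      have "x \<bullet> \<alpha> = M x \<bullet> V" using sa[of x V] V by simp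
      also have "\<dots> = (\<Sum>b\<in>Basis. (M x \<bullet> b) * (V \<bullet> b))" by (rule euclidean_inner)
      finally show ?thesis by (simp add: inner_commute mult.commute)
    qed
    then show ?thesis
      unfolding gmono_succ[OF \<alpha>, symmetric] by (simp add: sum_distrib_left sum_distrib_right mult_ac)
  qed
  have "(LINT x|lborel. gmono (p(\<alpha> := p \<alpha> + 1)) x * gw M x) = (\<Sum>b\<in>Basis. (V \<bullet> b) * (LINT x|lborel. (b \<bullet> M x) * (gmono p x * gw M x)))"
    unfolding e
    by (subst Bochner_Integration.integral_sum) (auto intro!: integrable_mult_right simp: lin_int sa[of _ "M _"] sa)
  also have "\<dots> = (\<Sum>b\<in>Basis. (V \<bullet> b) * (real (p b) * (LINT x|lborel. gmono (p(b := p b - 1)) x * gw M x)))"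
    by (intro sum.cong refl) (simp add: ibp)
  finally show ?thesis unfolding En_def by (simp add: sum_divide_distrib)
qed

end

definition deg :: "('a::euclidean_space \<Rightarrow> nat) \<Rightarrow> nat" where
  "deg p = (\<Sum>b\<in>Basis. p b)"

lemma deg_dec:
  assumes "\<alpha> \<in> Basis" "p \<alpha> > 0"
  shows "deg (p(\<alpha> := p \<alpha> - 1)) < deg p"
  unfolding deg_def using assms
  by (intro sum_strict_mono_ex1) auto

lemma deg_le: "deg (p(\<alpha> := p \<alpha> - 1)) \<le> deg p"
  unfolding deg_def by (intro sum_mono) auto

context gsetup
begin

lemma En_nonneg: "En p \<ge> 0"
proof (induction "deg p" arbitrary: p rule: less_induct)
  case less
  show ?case
  proof (cases "\<forall>b\<in>Basis. p b = 0")
    case True then show ?thesis by (simp add: En_zero)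
  next
    case False
    then obtain \<alpha> where \<alpha>: "\<alpha> \<in> Basis" "p \<alpha> > 0" by auto
    obtain V where V: "M V = \<alpha>" "\<forall>\<beta>\<in>Basis. V \<bullet> \<beta> \<ge> 0" using invpos[OF \<alpha>(1)] by blast
    define p0 where "p0 = p(\<alpha> := p \<alpha> - 1)"
    have pe: "p = p0(\<alpha> := p0 \<alpha> + 1)" unfolding p0_def using \<alpha> by auto
    have d0: "deg p0 < deg p" unfolding p0_def using deg_dec[of \<alpha> p] \<alpha> by blast
    have "En p = (\<Sum>b\<in>Basis. (V \<bullet> b) * (real (p0 b) * En (p0(b := p0 b - 1))))"
      by (subst pe) (rule En_rec[OF \<alpha>(1) V(1)])
    also have "\<dots> \<ge> 0"
    proof (intro sum_nonneg mult_nonneg_nonneg)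
      fix b :: 'a assume "b \<in> Basis"
      then show "V \<bullet> b \<ge> 0" using V by auto
      show "real (p0 b) \<ge> 0" by simp
      show "En (p0(b := p0 b - 1)) \<ge> 0"
        using less[of "p0(b := p0 b - 1)"] deg_le[of p0 b] d0 by simp
    qed
    finally show ?thesis .
  qed
qed

lemma En_split:
  "real (p0 b + q b) * En ((p0 + q)(b := (p0 + q) b - 1)) =
   real (p0 b) * En (p0(b := p0 b - 1) + q) + real (q b) * En (p0 + q(b := q b - 1))"
proof -
  have e1: "p0 b > 0 \<Longrightarrow> (p0 + q)(b := (p0 + q) b - 1) = p0(b := p0 b - 1) + q"
    by (auto simp: fun_eq_iff)
  have e2: "q b > 0 \<Longrightarrow> (p0 + q)(b := (p0 + q) b - 1) = p0 + q(b := q b - 1)"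
    by (auto simp: fun_eq_iff)
  show ?thesis
  proof (cases "p0 b = 0")
    case True
    show ?thesis
    proof (cases "q b = 0")
      case True2: True
      then show ?thesis using True by simp
    next
      case False
      then have "q b > 0" by simp
      show ?thesis unfolding e2[OF \<open>q b > 0\<close>] using True by simp
    qed
  next
    case False
    then show ?thesis
    proof (cases "q b = 0")
      case True
      have "p0 b > 0" using False by simp
      show ?thesis unfolding e1[OF \<open>p0 b > 0\<close>] using True by simp
    next
      case qF: False
      have "real (p0 b + q b) * En ((p0 + q)(b := (p0 + q) b - 1)) =
        real (p0 b) * En ((p0 + q)(b := (p0 + q) b - 1)) + real (q b) * En ((p0 + q)(b := (p0 + q) b - 1))"
        by (simp add: algebra_simps)
      then show ?thesis unfolding e1[of] using e1 e2 False qF by (metis gr0I)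
    qed
  qed
qed

lemma En_corr: "En (p + q) \<ge> En p * En q"
proof (induction "deg p" arbitrary: p rule: less_induct)
  case less
  show ?case
  proof (cases "\<forall>b\<in>Basis. p b = 0")
    case True
    then have "gmono (p + q) = gmono q" by (intro gmono_cong) auto
    then have "En (p + q) = En q" unfolding En_def by simp
    then show ?thesis using True by (simp add: En_zero)
  next
    case False
    then obtain \<alpha> where \<alpha>: "\<alpha> \<in> Basis" "p \<alpha> > 0" by auto
    obtain V where V: "M V = \<alpha>" "\<forall>\<beta>\<in>Basis. V \<bullet> \<beta> \<ge> 0" using invpos[OF \<alpha>(1)] by blast
    define p0 where "p0 = p(\<alpha> := p \<alpha> - 1)"
    have pe: "p = p0(\<alpha> := p0 \<alpha> + 1)" unfolding p0_def using \<alpha> by auto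
    have pqe: "p + q = (p0 + q)(\<alpha> := (p0 + q) \<alpha> + 1)" unfolding p0_def using \<alpha> by (auto simp: fun_eq_iff)
    have d0: "deg p0 < deg p" unfolding p0_def using deg_dec[of \<alpha> p] \<alpha> by blast
    have Ep: "En p = (\<Sum>b\<in>Basis. (V \<bullet> b) * (real (p0 b) * En (p0(b := p0 b - 1))))"
      by (subst pe) (rule En_rec[OF \<alpha>(1) V(1)])
    have "En (p + q) = (\<Sum>b\<in>Basis. (V \<bullet> b) * (real ((p0 + q) b) * En ((p0 + q)(b := (p0 + q) b - 1))))"
      by (subst pqe) (rule En_rec[OF \<alpha>(1) V(1)])
    also have "\<dots> = (\<Sum>b\<in>Basis. (V \<bullet> b) * (real (p0 b) * En (p0(b := p0 b - 1) + q) + real (q b) * En (p0 + q(b := q b - 1))))"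
      using En_split by simp
    also have "\<dots> \<ge> (\<Sum>b\<in>Basis. (V \<bullet> b) * (real (p0 b) * En (p0(b := p0 b - 1))) * En q)"
    proof (intro sum_mono)
      fix b :: 'a assume b: "b \<in> Basis"
      have IH: "En (p0(b := p0 b - 1) + q) \<ge> En (p0(b := p0 b - 1)) * En q"
        using less[of "p0(b := p0 b - 1)"] deg_le[of p0 b] d0 by simp
      have X: "real (p0 b) * (En (p0(b := p0 b - 1)) * En q) \<le> real (p0 b) * En (p0(b := p0 b - 1) + q) + real (q b) * En (p0 + q(b := q b - 1))"
        using mult_left_mono[OF IH, of "real (p0 b)"] En_nonneg[of "p0 + q(b := q b - 1)"]
        by (smt (verit) of_nat_0_le_iff mult_nonneg_nonneg)
      then show "(V \<bullet> b) * (real (p0 b) * En (p0(b := p0 b - 1))) * En q \<le> (V \<bullet> b) * (real (p0 b) * En (p0(b := p0 b - 1) + q) + real (q b) * En (p0 + q(b := q b - 1)))"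
        using mult_left_mono[OF X, of "V \<bullet> b"] V(2) b by (simp add: mult_ac)
    qed
    also have "(\<Sum>b\<in>Basis. (V \<bullet> b) * (real (p0 b) * En (p0(b := p0 b - 1))) * En q) = En p * En q"
      unfolding Ep by (simp add: sum_distrib_right)
    finally show ?thesis .
  qed
qed

end

definition pospoly :: "('a::euclidean_space \<Rightarrow> real) \<Rightarrow> bool" where
  "pospoly h \<longleftrightarrow> (\<exists>A c. finite A \<and> (\<forall>p\<in>A. c p \<ge> 0) \<and> (\<forall>x. h x = (\<Sum>p\<in>A. c p * gmono p x)))"

lemma gmono_add: "gmono (p + q) x = gmono p x * gmono q x"
  unfolding gmono_def by (simp add: power_add prod.distrib)

lemma pospoly_mono: "pospoly (gmono p)"
  unfolding pospoly_def by (rule exI[of _ "{p}"], rule exI[of _ "\<lambda>_. 1"]) simp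

lemma pospoly_const: "c \<ge> 0 \<Longrightarrow> pospoly (\<lambda>x. c)"
  unfolding pospoly_def
  by (rule exI[of _ "{\<lambda>_. 0}"], rule exI[of _ "\<lambda>_. c"]) (simp add: gmono_zero)

lemma sum_if_sub: "finite S \<Longrightarrow> A \<subseteq> S \<Longrightarrow> (\<Sum>p\<in>S. if p \<in> A then h p else 0) = sum h A"
  by (metis (no_types) sum.inter_restrict inf.absorb_iff2)

lemma pospoly_add:
  assumes "pospoly f" "pospoly g"
  shows "pospoly (\<lambda>x. f x + g x)"
proof -
  obtain A c where A: "finite A" "\<forall>p\<in>A. c p \<ge> 0" "\<forall>x. f x = (\<Sum>p\<in>A. c p * gmono p x)"
    using assms(1) unfolding pospoly_def by blast
  obtain B d where B: "finite B" "\<forall>p\<in>B. d p \<ge> 0" "\<forall>x. g x = (\<Sum>p\<in>B. d p * gmono p x)"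
    using assms(2) unfolding pospoly_def by blast
  define e where "e p = (if p \<in> A then c p else 0) + (if p \<in> B then d p else 0)" for p
  have "f x + g x = (\<Sum>p\<in>A \<union> B. e p * gmono p x)" for x
  proof -
    have "(\<Sum>p\<in>A \<union> B. e p * gmono p x) = (\<Sum>p\<in>A \<union> B. (if p \<in> A then c p * gmono p x else 0)) + (\<Sum>p\<in>A \<union> B. (if p \<in> B then d p * gmono p x else 0))"
      unfolding e_def sum.distrib[symmetric] by (intro sum.cong refl) (auto simp: algebra_simps)
    also have "\<dots> = f x + g x"
      using A B by (simp add: sum_if_sub)
    finally show ?thesis by simp
  qed
  moreover have "\<forall>p\<in>A \<union> B. e p \<ge> 0" using A B unfolding e_def by auto
  ultimately show ?thesis unfolding pospoly_def using A B by (intro exI[of _ "A \<union> B"] exI[of _ e]) auto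
qed

lemma pospoly_mult:
  assumes "pospoly f" "pospoly g"
  shows "pospoly (\<lambda>x. f x * g x)"
proof -
  obtain A c where A: "finite A" "\<forall>p\<in>A. c p \<ge> 0" "\<forall>x. f x = (\<Sum>p\<in>A. c p * gmono p x)"
    using assms(1) unfolding pospoly_def by blast
  obtain B d where B: "finite B" "\<forall>p\<in>B. d p \<ge> 0" "\<forall>x. g x = (\<Sum>p\<in>B. d p * gmono p x)"
    using assms(2) unfolding pospoly_def by blast
  define S where "S = A \<times> B"
  define m where "m = (\<lambda>(p::'a\<Rightarrow>nat, q). p + q)"
  define R where "R = m ` S"
  define e where "e r = (\<Sum>pq\<in>{pq. pq \<in> S \<and> m pq = r}. c (fst pq) * d (snd pq))" for r
  have fS: "finite S" unfolding S_def using A B by simp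
  have fR: "finite R" unfolding R_def using fS by simp
  have "f x * g x = (\<Sum>r\<in>R. e r * gmono r x)" for x
  proof -
    have "f x * g x = (\<Sum>pq\<in>S. c (fst pq) * d (snd pq) * gmono (m pq) x)"
      using A B unfolding S_def m_def
      by (simp add: sum_product sum.cartesian_product gmono_add mult_ac case_prod_beta)
    also have "\<dots> = (\<Sum>r\<in>R. \<Sum>pq\<in>{pq. pq \<in> S \<and> m pq = r}. c (fst pq) * d (snd pq) * gmono (m pq) x)"
      by (rule sum.group[symmetric, OF fS fR]) (simp add: R_def)
    also have "\<dots> = (\<Sum>r\<in>R. e r * gmono r x)"
      unfolding e_def sum_distrib_right by (intro sum.cong refl) auto
    finally show ?thesis .
  qed
  moreover have "\<forall>r\<in>R. e r \<ge> 0"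
    unfolding e_def S_def using A B by (auto intro!: sum_nonneg)
  ultimately show ?thesis unfolding pospoly_def using fR by blast
qed

lemma pospoly_prod:
  assumes "finite I" "\<And>i. i \<in> I \<Longrightarrow> pospoly (f i)"
  shows "pospoly (\<lambda>x. \<Prod>i\<in>I. f i x)"
  using assms
proof (induction I rule: finite_induct)
  case empty then show ?case by (simp add: pospoly_const)
next
  case (insert i I)
  then show ?case by (simp add: pospoly_mult)
qed

lemma pospoly_sum:
  assumes "finite I" "\<And>i. i \<in> I \<Longrightarrow> pospoly (f i)"
  shows "pospoly (\<lambda>x. \<Sum>i\<in>I. f i x)"
  using assms
proof (induction I rule: finite_induct)
  case empty then show ?case by (simp add: pospoly_const)
next
  case (insert i I)
  then show ?case by (simp add: pospoly_add)
qed

lemma pospoly_pow: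
  assumes "pospoly f"
  shows "pospoly (\<lambda>x. f x ^ n)"
proof (induction n)
  case 0 then show ?case by (simp add: pospoly_const)
next
  case (Suc n) then show ?case using pospoly_mult[OF assms Suc] by simp
qed

lemma pospoly_scale:
  assumes "c \<ge> 0" "pospoly f"
  shows "pospoly (\<lambda>x. c * f x)"
  using pospoly_mult[OF pospoly_const[OF assms(1)] assms(2)] .

context gsetup
begin

lemma Ew_sum:
  assumes "finite A"
  shows "(LINT x|lborel. (gw M x / Zc) * (\<Sum>i\<in>A. a i * gmono (m i) x)) = (\<Sum>i\<in>A. a i * En (m i))"
proof -
  have "(LINT x|lborel. (gw M x / Zc) * (\<Sum>i\<in>A. a i * gmono (m i) x)) =
        (LINT x|lborel. (\<Sum>i\<in>A. (a i / Zc) * (gmono (m i) x * gw M x)))"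
    by (simp add: sum_distrib_left mult_ac)
  also have "\<dots> = (\<Sum>i\<in>A. (a i / Zc) * (LINT x|lborel. gmono (m i) x * gw M x))"
    by (subst Bochner_Integration.integral_sum) (auto intro!: integrable_mult_right gint)
  also have "\<dots> = (\<Sum>i\<in>A. a i * En (m i))"
    unfolding En_def by simp
  finally show ?thesis .
qed

end

lemma Fpos_quad:
  fixes F :: "real^'k^'k"
  assumes posdef: "\<And>v. v \<noteq> 0 \<Longrightarrow> v \<bullet> (F *v v) > 0"
  shows "\<exists>mu>0. \<forall>v. v \<bullet> (F *v v) \<ge> mu * (norm v)^2"
proof -
  have ne: "sphere (0::real^'k) 1 \<noteq> {}"
    using norm_axis_1[of undefined] by (auto simp: sphere_def dist_norm intro!: exI[of _ "axis undefined 1"])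
  have co: "continuous_on (sphere 0 1) (\<lambda>v::real^'k. v \<bullet> (F *v v))"
    by (intro continuous_intros linear_continuous_on matrix_vector_mul_linear[THEN linear_conv_bounded_linear[THEN iffD1]]
        continuous_on_compose2[OF linear_continuous_on[OF matrix_vector_mul_linear[THEN linear_conv_bounded_linear[THEN iffD1]]]]) auto
  obtain u where u: "u \<in> sphere 0 1" "\<And>y. y \<in> sphere 0 1 \<Longrightarrow> u \<bullet> (F *v u) \<le> y \<bullet> (F *v y)"
    using continuous_attains_inf[OF compact_sphere ne co] by blast
  have u0: "u \<noteq> 0" using u(1) by auto
  define mu where "mu = u \<bullet> (F *v u)"
  have mu: "mu > 0" unfolding mu_def using posdef[OF u0] .
  have "v \<bullet> (F *v v) \<ge> mu * (norm v)^2" for v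
  proof (cases "v = 0")
    case True then show ?thesis by simp
  next
    case False
    define w where "w = (1 / norm v) *\<^sub>R v"
    have w: "w \<in> sphere 0 1" unfolding w_def using False by (simp add: sphere_def dist_norm)
    have vw: "v = norm v *\<^sub>R w" unfolding w_def using False by simp
    have "v \<bullet> (F *v v) = (norm v)^2 * (w \<bullet> (F *v w))"
      by (subst (1 2) vw) (simp add: matrix_vector_mult_scaleR power2_eq_square)
    also have "\<dots> \<ge> (norm v)^2 * mu" unfolding mu_def using u(2)[OF w] by (intro mult_left_mono) auto
    finally show ?thesis by (simp add: mult.commute)
  qed
  then show ?thesis using mu by blast
qed

lemma Fmmat:
  fixes F :: "real^'k^'k"
  assumes posdef: "\<And>v. v \<noteq> 0 \<Longrightarrow> v \<bullet> (F *v v) > 0"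
    and offdiag: "\<And>i j. i \<noteq> j \<Longrightarrow> F $ i $ j \<le> 0"
  shows "\<exists>g. F *v g = axis a 1 \<and> (\<forall>i. g $ i \<ge> 0)"
proof -
  have inj: "inj (\<lambda>v. F *v v)"
  proof (rule injI)
    fix u v assume "F *v u = F *v v"
    then have "F *v (u - v) = 0" by (simp add: matrix_vector_mult_diff_distrib)
    then show "u = v" using posdef[of "u - v"] by (cases "u - v = 0") auto
  qed
  have "surj (\<lambda>v. F *v v)"
    by (rule linear_injective_imp_surjective[OF matrix_vector_mul_linear inj]) auto
  then obtain v where v: "F *v v = axis a 1" by (metis surjD)
  define n where "n = (\<chi> i. max 0 (- v $ i))"
  define P where "P = (\<chi> i. max 0 (v $ i))"
  have vPn: "v = P - n" unfolding P_def n_def by (auto simp: vec_eq_iff)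
  have "n = 0"
  proof (rule ccontr)
    assume "n \<noteq> 0"
    then have pos: "n \<bullet> (F *v n) > 0" by (rule posdef)
    have "n \<bullet> (F *v v) \<ge> 0"
      unfolding v by (simp add: inner_vec_def axis_def n_def sum_nonneg)
    moreover have "n \<bullet> (F *v P) \<le> 0"
    proof -
      have "n \<bullet> (F *v P) = (\<Sum>i\<in>UNIV. \<Sum>j\<in>UNIV. n $ i * F $ i $ j * P $ j)"
        by (simp add: inner_vec_def matrix_vector_mult_def sum_distrib_left mult_ac)
      also have "\<dots> \<le> 0"
      proof (intro sum_nonpos)
        fix i j :: 'k
        show "n $ i * F $ i $ j * P $ j \<le> 0"
        proof (cases "i = j")
          case True
          have "n $ i * P $ j = 0" unfolding True n_def P_def by (simp add: max_def)
          then show ?thesis by (metis mult.commute mult_zero_left order_refl mult.left_commute)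
        next
          case False
          have "n $ i * P $ j \<ge> 0" by (simp add: n_def P_def)
          then have "(n $ i * P $ j) * F $ i $ j \<le> 0" using offdiag[OF False] by (simp add: mult_nonneg_nonpos)
          then show ?thesis by (simp add: mult_ac)
        qed
      qed
      finally show ?thesis .
    qed
    moreover have "n \<bullet> (F *v v) = n \<bullet> (F *v P) - n \<bullet> (F *v n)"
      unfolding vPn by (simp add: matrix_vector_mult_diff_distrib inner_diff_right)
    ultimately show False using pos by linarith
  qed
  then have "\<forall>i. v $ i \<ge> 0" unfolding n_def by (auto simp: vec_eq_iff max_def split: if_splits) (metis linorder_le_cases)
  then show ?thesis using v by blast
qed

definition Mf :: "real^'k^'k \<Rightarrow> real^'n^'k \<Rightarrow> real^'n^'k" where
  "Mf F x = (\<chi> i. \<Sum>j\<in>UNIV. F $ i $ j *\<^sub>R x $ j)"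

lemma Mf_quad: "x \<bullet> Mf F x = (\<Sum>i\<in>UNIV. \<Sum>j\<in>UNIV. F $ i $ j * (x $ i \<bullet> x $ j))"
  by (simp add: Mf_def inner_vec_def[of x] inner_sum_right)

lemma gw_eq: "gauss_weight F x = gw (Mf F) x"
  unfolding gauss_weight_def gw_def Mf_quad ..

lemma Mf_linear: "linear (Mf F)"
  by (rule linearI) (simp_all add: Mf_def vec_eq_iff scaleR_add_right sum.distrib scaleR_sum_right mult_ac)

lemma Mf_sa:
  assumes symm: "transpose F = F"
  shows "u \<bullet> Mf F v = Mf F u \<bullet> v"
proof -
  have Fs: "F $ j $ i = F $ i $ j" for i j
    using arg_cong[OF symm, of "\<lambda>A. A $ i $ j"] by (simp add: transpose_def)
  have "u \<bullet> Mf F v = (\<Sum>i\<in>UNIV. \<Sum>j\<in>UNIV. F $ i $ j * (u $ i \<bullet> v $ j))"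
    by (simp add: Mf_def inner_vec_def[of u] inner_sum_right)
  also have "\<dots> = (\<Sum>j\<in>UNIV. \<Sum>i\<in>UNIV. F $ i $ j * (u $ i \<bullet> v $ j))"
    by (rule sum.swap)
  also have "\<dots> = (\<Sum>j\<in>UNIV. \<Sum>i\<in>UNIV. F $ j $ i * (u $ i \<bullet> v $ j))"
    by (simp add: Fs)
  also have "\<dots> = Mf F u \<bullet> v"
    by (simp add: Mf_def inner_vec_def[of _ v] inner_sum_left)
  finally show ?thesis .
qed

lemma Mf_coer:
  fixes F :: "real^'k^'k"
  assumes posdef: "\<And>v. v \<noteq> 0 \<Longrightarrow> v \<bullet> (F *v v) > 0"
  shows "\<exists>lam>0. \<forall>x::real^'n^'k. x \<bullet> Mf F x \<ge> lam * (norm x)^2"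
proof -
  obtain mu where mu: "mu > 0" "\<And>v. v \<bullet> (F *v v) \<ge> mu * (norm v)^2"
    using Fpos_quad[OF posdef] by blast
  have "x \<bullet> Mf F x \<ge> mu * (norm x)^2" for x :: "real^'n^'k"
  proof -
    define col where "col c = (\<chi> i. x $ i $ c)" for c
    have "x \<bullet> Mf F x = (\<Sum>i\<in>UNIV. \<Sum>j\<in>UNIV. \<Sum>c\<in>UNIV. F $ i $ j * (x $ i $ c * x $ j $ c))"
      unfolding Mf_quad by (simp add: inner_vec_def sum_distrib_left)
    also have "\<dots> = (\<Sum>c\<in>UNIV. \<Sum>i\<in>UNIV. \<Sum>j\<in>UNIV. F $ i $ j * (x $ i $ c * x $ j $ c))"
      by (subst sum.swap, rule sum.cong[OF refl], rule sum.swap)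
    also have "\<dots> = (\<Sum>c\<in>UNIV. col c \<bullet> (F *v col c))"
      by (simp add: col_def inner_vec_def matrix_vector_mult_def sum_distrib_left mult_ac)
    also have "\<dots> \<ge> (\<Sum>c\<in>UNIV. mu * (norm (col c))^2)"
      by (intro sum_mono mu(2))
    also have "(\<Sum>c\<in>UNIV. mu * (norm (col c))^2) = mu * (norm x)^2"
    proof -
      have "(norm x)^2 = (\<Sum>i\<in>UNIV. \<Sum>c\<in>UNIV. (x $ i $ c)^2)"
        unfolding power2_norm_eq_inner by (simp add: inner_vec_def power2_eq_square)
      also have "\<dots> = (\<Sum>c\<in>UNIV. (norm (col c))^2)"
        unfolding power2_norm_eq_inner by (subst sum.swap) (simp add: inner_vec_def power2_eq_square col_def)
      finally show ?thesis by (simp add: sum_distrib_left)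
    qed
    finally show ?thesis .
  qed
  then show ?thesis using mu(1) by blast
qed

lemma Mf_invpos:
  fixes F :: "real^'k^'k"
  assumes posdef: "\<And>v. v \<noteq> 0 \<Longrightarrow> v \<bullet> (F *v v) > 0"
    and offdiag: "\<And>i j. i \<noteq> j \<Longrightarrow> F $ i $ j \<le> 0"
    and \<alpha>: "(\<alpha>::real^'n^'k) \<in> Basis"
  shows "\<exists>V. Mf F V = \<alpha> \<and> (\<forall>\<beta>\<in>Basis. V \<bullet> \<beta> \<ge> 0)"
proof -
  obtain a u where au: "\<alpha> = axis a u" "u \<in> Basis" using \<alpha> unfolding Basis_vec_def by blast
  obtain g where g: "F *v g = axis a 1" "\<forall>i. g $ i \<ge> 0" using Fmmat[OF posdef offdiag] by blast
  define V where "V = (\<chi> i. g $ i *\<^sub>R u)"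
  have "Mf F V = \<alpha>"
  proof -
    have "(Mf F V) $ i = (F *v g) $ i *\<^sub>R u" for i
      by (simp add: Mf_def V_def matrix_vector_mult_def scaleR_sum_left)
    then show ?thesis unfolding au g(1) by (simp add: vec_eq_iff axis_def)
  qed
  moreover have "V \<bullet> \<beta> \<ge> 0" if "\<beta> \<in> Basis" for \<beta>
  proof -
    obtain j u' where ju: "\<beta> = axis j u'" "u' \<in> Basis" using \<open>\<beta> \<in> Basis\<close> unfolding Basis_vec_def by blast
    have "V \<bullet> \<beta> = g $ j * (u \<bullet> u')" unfolding ju by (simp add: inner_axis V_def)
    also have "\<dots> \<ge> 0" using g(2) au(2) ju(2) by (simp add: inner_Basis)
    finally show ?thesis .
  qed
  ultimately show ?thesis by blast
qed

lemma Mf_gsetup: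
  fixes F :: "real^'k^'k"
  assumes symm: "transpose F = F"
    and posdef: "\<And>v. v \<noteq> 0 \<Longrightarrow> v \<bullet> (F *v v) > 0"
    and offdiag: "\<And>i j. i \<noteq> j \<Longrightarrow> F $ i $ j \<le> 0"
  shows "\<exists>lam. gsetup (Mf F :: real^'n^'k \<Rightarrow> _) lam"
proof -
  obtain lam where lam: "lam > 0" "\<forall>x::real^'n^'k. x \<bullet> Mf F x \<ge> lam * (norm x)^2"
    using Mf_coer[OF posdef] by blast
  have "gsetup (Mf F :: real^'n^'k \<Rightarrow> _) lam"
    unfolding gsetup_def
  proof (intro conjI allI impI)
    show "linear (Mf F :: real^'n^'k \<Rightarrow> _)" by (rule Mf_linear)
    show "u \<bullet> Mf F v = Mf F u \<bullet> v" for u v :: "real^'n^'k" by (rule Mf_sa[OF symm])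
    show "lam > 0" by (rule lam(1))
    show "x \<bullet> Mf F x \<ge> lam * (norm x)^2" for x :: "real^'n^'k" using lam(2) by blast
    show "\<exists>V. Mf F V = \<alpha> \<and> (\<forall>\<beta>\<in>Basis. V \<bullet> \<beta> \<ge> 0)" if "\<alpha> \<in> Basis" for \<alpha> :: "real^'n^'k"
      by (rule Mf_invpos[OF posdef offdiag that])
  qed
  then show ?thesis by blast
qed

lemma coord_pospoly: "pospoly (\<lambda>x::real^'n^'k. x $ i $ c)"
proof -
  define \<beta> where "\<beta> = (axis i (axis c (1::real)) :: real^'n^'k)"
  have \<beta>: "\<beta> \<in> Basis" unfolding \<beta>_def by simp
  have "gmono (\<lambda>b. if b = \<beta> then 1 else 0) x = x $ i $ c" for x :: "real^'n^'k"
  proof -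
    have "gmono (\<lambda>b. if b = \<beta> then 1 else 0) x = (\<Prod>b\<in>Basis. if b = \<beta> then x \<bullet> b else 1)"
      unfolding gmono_def by (intro prod.cong refl) auto
    also have "\<dots> = x \<bullet> \<beta>" using \<beta> by simp
    also have "\<dots> = x $ i $ c" unfolding \<beta>_def by (simp add: inner_axis)
    finally show ?thesis .
  qed
  then have "(\<lambda>x::real^'n^'k. x $ i $ c) = gmono (\<lambda>b. if b = \<beta> then 1 else 0)" by auto
  then show ?thesis using pospoly_mono by metis
qed

lemma inner_pospoly: "pospoly (\<lambda>x::real^'n^'k. x $ i \<bullet> x $ j)"
proof -
  have "pospoly (\<lambda>x::real^'n^'k. \<Sum>c\<in>UNIV. x $ i $ c * x $ j $ c)"
    by (intro pospoly_sum pospoly_mult coord_pospoly) auto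
  then show ?thesis by (simp add: inner_vec_def)
qed

lemma multinomial_pospoly: "pospoly (multinomial e :: real^'n^('k::{finite,linorder}) \<Rightarrow> real)"
proof -
  have "pospoly (\<lambda>x::real^'n^('k::{finite,linorder}). \<Prod>p\<in>{(i,j). i \<le> j}. (x $ fst p \<bullet> x $ snd p) ^ e p)"
  proof (rule pospoly_prod)
    show "finite {(i::'k,j). i \<le> j}" by simp
    fix p :: "'k \<times> 'k"
    show "pospoly (\<lambda>x::((real,'n) vec,'k) vec. (x $ fst p \<bullet> x $ snd p) ^ e p)"
      by (rule pospoly_pow[OF inner_pospoly])
  qed
  then show ?thesis unfolding multinomial_def[abs_def] .
qed

lemma cone_pospoly:
  assumes "f \<in> multinomial_cone"
  shows "pospoly (f :: real^'n^('k::{finite,linorder}) \<Rightarrow> real)"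
proof -
  obtain S c where S: "finite S" "\<forall>e\<in>S. c e \<ge> 0" "f = (\<lambda>x. \<Sum>e\<in>S. c e * multinomial e x)"
    using assms unfolding multinomial_cone_def by blast
  show ?thesis unfolding S(3)
  proof (rule pospoly_sum[OF S(1)])
    fix e assume "e \<in> S"
    then show "pospoly (\<lambda>x. c e * multinomial e (x::((real,'n) vec,'k) vec))"
      using S(2) by (intro pospoly_scale[OF _ multinomial_pospoly]) auto
  qed
qed

theorem proposition1:
  fixes F :: "((real, 'k::{finite,linorder}) vec, 'k) vec"
    and f g :: "((real, 'n::finite) vec, 'k) vec \<Rightarrow> real"
  assumes symm: "transpose F = F"
    and posdef: "\<And>v. v \<noteq> 0 \<Longrightarrow> v \<bullet> (F *v v) > 0"
    and offdiag: "\<And>i j. i \<noteq> j \<Longrightarrow> F $ i $ j \<le> 0"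
    and f: "f \<in> multinomial_cone" and g: "g \<in> multinomial_cone"
  shows "gauss_E F f \<ge> 0 \<and> gauss_E F (\<lambda>x. f x * g x) \<ge> gauss_E F f * gauss_E F g"
proof -
  obtain lam where "gsetup (Mf F :: ((real,'n) vec,'k) vec \<Rightarrow> _) lam"
    using Mf_gsetup[OF symm posdef offdiag] by blast
  then interpret G: gsetup "Mf F :: ((real,'n) vec,'k) vec \<Rightarrow> _" lam .
  have gweq: "gauss_weight F = gw (Mf F :: ((real,'n) vec,'k) vec \<Rightarrow> _)" by (rule ext) (rule gw_eq)
  have Zeq: "gauss_Z F TYPE('n) = G.Zc"
    unfolding gauss_Z_def G.Zc_def gweq ..
  have "(\<lambda>x. gw (Mf F) x / G.Zc) \<in> borel_measurable (borel :: (((real,'n) vec,'k) vec) measure)"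
    unfolding gw_def using G.Zc_pos
    by (intro borel_measurable_continuous_onI continuous_intros
          continuous_on_compose2[OF G.contM]) auto
  then have wm: "(\<lambda>x. gw (Mf F) x / G.Zc) \<in> borel_measurable (lborel :: (((real,'n) vec,'k) vec) measure)"
    by simp
  have Eeq: "gauss_E F h = (LINT x|lborel. (gw (Mf F) x / G.Zc) * h x)"
    if hm: "h \<in> borel_measurable lborel" for h :: "((real,'n) vec,'k) vec \<Rightarrow> real"
  proof -
    have "gauss_E F h = integral\<^sup>L (density lborel (\<lambda>x. ennreal (gw (Mf F) x / G.Zc))) h"
      unfolding gauss_E_def gauss_measure_def Zeq gweq ..
    also have "\<dots> = (LINT x|lborel. (gw (Mf F) x / G.Zc) *\<^sub>R h x)"
      using G.Zc_pos by (intro integral_density hm wm AE_I2) (simp add: gw_def)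
    finally show ?thesis by simp
  qed
  have Esum: "gauss_E F (\<lambda>x. \<Sum>i\<in>A. a i * gmono (m i) x) = (\<Sum>i\<in>A. a i * G.En (m i))"
    if "finite A" for A :: "'b set" and a m
  proof -
    have "(\<lambda>x::((real,'n) vec,'k) vec. \<Sum>i\<in>A. a i * gmono (m i) x) \<in> borel_measurable borel"
      unfolding gmono_def
      by (intro borel_measurable_continuous_onI continuous_intros)
    then have "(\<lambda>x::((real,'n) vec,'k) vec. \<Sum>i\<in>A. a i * gmono (m i) x) \<in> borel_measurable lborel"
      by simp
    then show ?thesis using Eeq G.Ew_sum[OF that] by simp
  qed
  obtain A c where A: "finite A" "\<forall>p\<in>A. c p \<ge> 0" "\<forall>x. f x = (\<Sum>p\<in>A. c p * gmono p x)"
    using cone_pospoly[OF f] unfolding pospoly_def by blast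
  obtain B d where B: "finite B" "\<forall>p\<in>B. d p \<ge> 0" "\<forall>x. g x = (\<Sum>p\<in>B. d p * gmono p x)"
    using cone_pospoly[OF g] unfolding pospoly_def by blast
  have fe: "f = (\<lambda>x. \<Sum>p\<in>A. c p * gmono (id p) x)" using A(3) by auto
  have ge: "g = (\<lambda>x. \<Sum>p\<in>B. d p * gmono (id p) x)" using B(3) by auto
  have Ef: "gauss_E F f = (\<Sum>p\<in>A. c p * G.En p)" unfolding fe Esum[OF A(1)] by simp
  have Eg: "gauss_E F g = (\<Sum>p\<in>B. d p * G.En p)" unfolding ge Esum[OF B(1)] by simp
  have fge: "(\<lambda>x. f x * g x) = (\<lambda>x. \<Sum>pq\<in>A \<times> B. (c (fst pq) * d (snd pq)) * gmono (fst pq + snd pq) x)"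
  proof
    fix x
    have "f x * g x = (\<Sum>p\<in>A. \<Sum>q\<in>B. (c p * d q) * gmono (p + q) x)"
      unfolding A(3)[rule_format] B(3)[rule_format] sum_product gmono_add
      by (intro sum.cong refl) (simp add: mult_ac)
    also have "\<dots> = (\<Sum>pq\<in>A \<times> B. (c (fst pq) * d (snd pq)) * gmono (fst pq + snd pq) x)"
      unfolding sum.cartesian_product by (rule sum.cong[OF refl]) (simp add: case_prod_beta)
    finally show "f x * g x = (\<Sum>pq\<in>A \<times> B. (c (fst pq) * d (snd pq)) * gmono (fst pq + snd pq) x)" .
  qed
  have Efg: "gauss_E F (\<lambda>x. f x * g x) = (\<Sum>pq\<in>A \<times> B. (c (fst pq) * d (snd pq)) * G.En (fst pq + snd pq))"
    unfolding fge by (rule Esum) (use A(1) B(1) in simp)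
  have "gauss_E F f \<ge> 0" unfolding Ef using A(2) G.En_nonneg by (intro sum_nonneg mult_nonneg_nonneg) auto
  moreover have "gauss_E F (\<lambda>x. f x * g x) \<ge> gauss_E F f * gauss_E F g"
  proof -
    have "(\<Sum>pq\<in>A \<times> B. (c (fst pq) * d (snd pq)) * (G.En (fst pq) * G.En (snd pq))) \<le>
          (\<Sum>pq\<in>A \<times> B. (c (fst pq) * d (snd pq)) * G.En (fst pq + snd pq))"
    proof (rule sum_mono)
      fix pq assume "pq \<in> A \<times> B"
      then have "c (fst pq) * d (snd pq) \<ge> 0" using A(2) B(2) by auto
      then show "(c (fst pq) * d (snd pq)) * (G.En (fst pq) * G.En (snd pq)) \<le> (c (fst pq) * d (snd pq)) * G.En (fst pq + snd pq)"
        by (rule mult_left_mono[OF G.En_corr])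
    qed
    also have "(\<Sum>pq\<in>A \<times> B. (c (fst pq) * d (snd pq)) * (G.En (fst pq) * G.En (snd pq))) = gauss_E F f * gauss_E F g"
    proof -
      have "gauss_E F f * gauss_E F g = (\<Sum>p\<in>A. \<Sum>q\<in>B. (c p * d q) * (G.En p * G.En q))"
        unfolding Ef Eg sum_product by (intro sum.cong refl) (simp add: mult_ac)
      also have "\<dots> = (\<Sum>pq\<in>A \<times> B. (c (fst pq) * d (snd pq)) * (G.En (fst pq) * G.En (snd pq)))"
        unfolding sum.cartesian_product by (rule sum.cong[OF refl]) (simp add: case_prod_beta)
      finally show ?thesis by (rule sym)
    qed
    finally show ?thesis unfolding Efg .
  qed
  ultimately show ?thesis by (rule conjI)
qed

end
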